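(* Assume the setting described in the context. Then: (i) Define, for each input-information value $J$, the random quantity $$\Delta s(J)=\int_{\mathbb{R}}\Pi_X(x\mid J)\,\log_2\frac{p_1(x;J)}{p(x;J)}\,dx,$$ which equals $KL[\Pi_X(\cdot\mid J)\,\|\,p(\cdot;J)]-KL[\Pi_X(\cdot\mid J)\,\|\,p_1(\cdot;J)]$ whenever both divergences are finite. Then $$E_{\mathrm{post}}\Big\{E_{\mathcal J}\big[\Delta s(\mathcal J)\big]\Big\}=\int_0^1\bar\pi(f)\log_2\bar\pi(f)\,df\;\ge\;0,$$ with equality if and only if $\bar\pi(f)=1$ for almost every $f\in[0,1]$, in which case $p_1(\cdot;J)=p(\cdot;J)$ almost everywhere for every $J$. In particular, in expectation over $\mathcal J$ and over the epistemic uncertainty, $\Pi_X(\cdot\mid J)$ is closer in relative entropy to $p_1(\cdot;J)$ than to $p(\cdot;J)$ unless $p_1=p$ almost everywhere. (ii) Let $\tilde G(f)=\int_0^f\bar\pi(f')\,df'$, so that $\tilde G(\tilde F(x;J))$ is the cumulative distribution function of $p_1(\cdot;J)$ (the PIT of the recalibrated forecast). For each $J$ define the random density of $G=\tilde G(F)$ by $\Pi_G(g\mid J)=\Pi(f\mid J)/\bar\pi(f)$ where $g=\tilde G(f)$, and let $\Pi_G(g\mid C)=E_{\mathcal J}[\Pi_G(g\mid\mathcal J)]$. Then for (almost) every $g\in[0,1]$, $$E_{\mathrm{post}}\{\Pi_G(g\mid C)\}=1,$$ i.e. the recalibrated forecast is, on average over the epistemic uncertainty, probabilistically calibrated (its expected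 PIT density is uniform on $[0,1]$).
   Context: Setting. $\mathcal J$ is a random variable ("input information") with distribution denoted by $E_{\mathcal J}$ for expectations. For each value $J$, $p(\cdot;J)$ is a probability density on $\mathbb{R}$ (the published forecast) with $p(x;J)>0$ for all $x$, and $\tilde F(x;J)=\int_{-\infty}^x p(x';J)\,dx'$ is its cumulative distribution function (the probability integral transform, PIT), a continuous strictly increasing bijection from $\mathbb{R}$ onto $(0,1)$. Epistemic uncertainty is modeled by a separate probability space with expectation $E_{\mathrm{post}}$ (the posterior given training PIT data): on it, for each $J$, $\Pi(\cdot\mid J)$ is a random probability density on $[0,1]$ (the imperfectly known ideal density of the PIT variable $F$ given $J$), jointly measurable in all arguments. Define the random density $\Pi(f\mid C)=E_{\mathcal J}[\Pi(f\mid\mathcal J)]$ and the predictive density $\bar\pi(f)=E_{\mathrm{post}}\{\Pi(f\mid C)\}$, assumed to be a strictly positive probability density on $[0,1]$. The imperfectly known ideal forecast density of the predictand is $\Pi_X(x\mid J)=\Pi(\tilde F(x;J)\mid J)\,p(x;J)$, and the recalibrated forecast is $p_1(x;J)=\bar\pi(\tilde F(x;J))\,p(x;J)$. The Kullback–Leibler divergence is $KL[f_2\|f_1]=\int f_2\log_2(f_2/f_1)$. All integrals and expectations are assumed finite, and expectations over $\mathcal J$ and over the epistemic uncertainty may be interchanged with integrals (Fubini). *)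

theory Defs
  imports "HOL-Probability.Probability"
begin

text \<open>The input information lives on a probability space MJ (type 'j),
the epistemic (posterior) uncertainty on a probability space MP (type 'w).
p J x is the published forecast density; PI w J f is the random ideal PIT density.\<close>

definition PIT :: "('j \<Rightarrow> real \<Rightarrow> real) \<Rightarrow> 'j \<Rightarrow> real \<Rightarrow> real" where
  "PIT p J x = (LINT t:{..x}|lborel. p J t)"

definition PiC :: "'j measure \<Rightarrow> ('w \<Rightarrow> 'j \<Rightarrow> real \<Rightarrow> real) \<Rightarrow> 'w \<Rightarrow> real \<Rightarrow> real" where
  "PiC MJ PI w f = (\<integral>J. PI w J f \<partial>MJ)"

definition pibar :: "'w measure \<Rightarrow> 'j measure \<Rightarrow> ('w \<Rightarrow> 'j \<Rightarrow> real \<Rightarrow> real) \<Rightarrow> real \<Rightarrow> real" where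
  "pibar MP MJ PI f = (\<integral>w. PiC MJ PI w f \<partial>MP)"

definition PiX :: "('w \<Rightarrow> 'j \<Rightarrow> real \<Rightarrow> real) \<Rightarrow> ('j \<Rightarrow> real \<Rightarrow> real) \<Rightarrow> 'w \<Rightarrow> 'j \<Rightarrow> real \<Rightarrow> real" where
  "PiX PI p w J x = PI w J (PIT p J x) * p J x"

definition p1 :: "'w measure \<Rightarrow> 'j measure \<Rightarrow> ('w \<Rightarrow> 'j \<Rightarrow> real \<Rightarrow> real) \<Rightarrow> ('j \<Rightarrow> real \<Rightarrow> real) \<Rightarrow> 'j \<Rightarrow> real \<Rightarrow> real" where
  "p1 MP MJ PI p J x = pibar MP MJ PI (PIT p J x) * p J x"

definition KL :: "(real \<Rightarrow> real) \<Rightarrow> (real \<Rightarrow> real) \<Rightarrow> real" where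
  "KL f2 f1 = (\<integral>x. f2 x * log 2 (f2 x / f1 x) \<partial>lborel)"

definition delta_s :: "'w measure \<Rightarrow> 'j measure \<Rightarrow> ('w \<Rightarrow> 'j \<Rightarrow> real \<Rightarrow> real) \<Rightarrow> ('j \<Rightarrow> real \<Rightarrow> real) \<Rightarrow> 'w \<Rightarrow> 'j \<Rightarrow> real" where
  "delta_s MP MJ PI p w J =
     (\<integral>x. PiX PI p w J x * log 2 (p1 MP MJ PI p J x / p J x) \<partial>lborel)"

definition Gt :: "'w measure \<Rightarrow> 'j measure \<Rightarrow> ('w \<Rightarrow> 'j \<Rightarrow> real \<Rightarrow> real) \<Rightarrow> real \<Rightarrow> real" where
  "Gt MP MJ PI f = (LINT t:{0..f}|lborel. pibar MP MJ PI t)"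

definition PiG :: "'w measure \<Rightarrow> 'j measure \<Rightarrow> ('w \<Rightarrow> 'j \<Rightarrow> real \<Rightarrow> real) \<Rightarrow> 'w \<Rightarrow> 'j \<Rightarrow> real \<Rightarrow> real" where
  "PiG MP MJ PI w J g =
     (let f = the_inv_into {0..1} (Gt MP MJ PI) g in PI w J f / pibar MP MJ PI f)"

definition PiGC :: "'w measure \<Rightarrow> 'j measure \<Rightarrow> ('w \<Rightarrow> 'j \<Rightarrow> real \<Rightarrow> real) \<Rightarrow> 'w \<Rightarrow> real \<Rightarrow> real" where
  "PiGC MP MJ PI w g = (\<integral>J. PiG MP MJ PI w J g \<partial>MJ)"

end

theory Submission
  imports Defs
begin

lemma dens_rd:
  fixes q :: "real \<Rightarrow> real"
  assumes q_nn: "\<And>x. 0 \<le> q x" and q_int: "integrable lborel q" and q1: "(\<integral>x. q x \<partial>lborel) = 1"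
  shows "real_distribution (density lborel (\<lambda>x. ennreal (q x)))" (is ?A)
    and "cdf (density lborel (\<lambda>x. ennreal (q x))) x = (LINT t:{..x}|lborel. q t)" (is ?B)
    and "isCont (cdf (density lborel (\<lambda>x. ennreal (q x)))) x" (is ?C)
proof -
  let ?M = "density lborel (\<lambda>x. ennreal (q x))"
  have qm[measurable]: "q \<in> borel_measurable borel" using q_int by auto
  have em: "emeasure ?M A = ennreal (LINT t:A|lborel. q t)" if A: "A \<in> sets borel" for A
  proof -
    have "emeasure ?M A = (\<integral>\<^sup>+t. ennreal (indicator A t * q t) \<partial>lborel)"
      using A by (subst emeasure_density) (auto intro!: nn_integral_cong simp: indicator_def)
    also have "\<dots> = ennreal (\<integral>t. indicator A t * q t \<partial>lborel)"
      using A q_int q_nn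
      by (intro nn_integral_eq_integral) (auto intro!: integrable_mult_indicator[of A lborel q, simplified])
    finally show ?thesis by (simp add: set_lebesgue_integral_def)
  qed
  show ?A
  proof -
    have "prob_space ?M"
    proof
      have "emeasure ?M UNIV = ennreal (LINT t:UNIV|lborel. q t)" by (rule em) simp
      then show "emeasure ?M (space ?M) = 1" using q1 by (simp add: set_lebesgue_integral_def)
    qed
    then show ?thesis unfolding real_distribution_def real_distribution_axioms_def by simp
  qed
  then interpret R: real_distribution ?M .
  show ?B unfolding cdf_def
    using em[of "{..x}"] by (simp add: measure_def set_lebesgue_integral_def q_nn)
  show ?C unfolding R.isCont_cdf
  proof -
    have "emeasure ?M {x} = (\<integral>\<^sup>+t. ennreal (q t) * indicator {x} t \<partial>lborel)"
      by (subst emeasure_density) auto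
    also have "\<dots> = 0" by (intro nn_integral_0_iff_AE[THEN iffD2]) (use AE_lborel_singleton[of x] in \<open>auto elim!: eventually_mono\<close>)
    finally show "measure ?M {x} = 0" by (simp add: measure_def)
  qed
qed
lemma dens_strict:
  fixes q :: "real \<Rightarrow> real"
  assumes q_nn: "\<And>x. 0 \<le> q x" and q_int: "integrable lborel q" and q1: "(\<integral>x. q x \<partial>lborel) = 1"
    and ab: "a < b" and pos: "\<And>x. a < x \<Longrightarrow> x < b \<Longrightarrow> q x > 0"
  shows "cdf (density lborel (\<lambda>x. ennreal (q x))) a < cdf (density lborel (\<lambda>x. ennreal (q x))) b"
proof -
  let ?M = "density lborel (\<lambda>x. ennreal (q x))"
  interpret R: real_distribution ?M by (rule dens_rd[OF q_nn q_int q1])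
  have qm[measurable]: "q \<in> borel_measurable borel" using q_int by auto
  have e: "emeasure ?M {a<..b} = ennreal (cdf ?M b - cdf ?M a)"
    using R.emeasure_Ioc[of a b] ab by simp
  have "emeasure ?M {a<..b} \<noteq> 0"
  proof
    assume "emeasure ?M {a<..b} = 0"
    then have "(\<integral>\<^sup>+t. ennreal (q t) * indicator {a<..b} t \<partial>lborel) = 0"
      by (subst (asm) emeasure_density) auto
    then have "AE t in lborel. ennreal (q t) * indicator {a<..b} t = 0"
      by (subst (asm) nn_integral_0_iff_AE) auto
    then obtain N where N0: "{t\<in>space lborel. \<not> (ennreal (q t) * indicator {a<..b} t = 0)} \<subseteq> N"
       "emeasure lborel N = 0" "N \<in> sets lborel"
      by (rule AE_E)
    then have N: "N \<in> null_sets lborel" "{t. ennreal (q t) * indicator {a<..b} t \<noteq> 0} \<subseteq> N"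
      by auto
    have "{a<..<b} \<subseteq> N"
    proof
      fix t assume "t \<in> {a<..<b}"
      then have "ennreal (q t) * indicator {a<..b} t \<noteq> 0" using pos[of t] by (auto simp: indicator_def)
      then show "t \<in> N" using N(2) by auto
    qed
    then have "emeasure lborel {a<..<b} \<le> emeasure lborel N"
      using N(1) by (intro emeasure_mono) auto
    then show False using N(1) ab by (auto simp: null_sets_def)
  qed
  then have "0 < cdf ?M b - cdf ?M a" using e
    using ennreal_eq_0_iff by fastforce
  then show ?thesis by linarith
qed

definition U01 :: "real measure" where "U01 = density lborel (indicator {0..1})"

lemma U01_rd: "real_distribution U01" and cdf_U01: "cdf U01 a = max 0 (min 1 a)"
proof -
  have em: "emeasure U01 X = emeasure lborel ({0..1} \<inter> X)" if "X \<in> sets borel" for X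
    unfolding U01_def using that by (subst emeasure_restricted) auto
  show "real_distribution U01"
    unfolding real_distribution_def real_distribution_axioms_def
  proof
    show "prob_space U01"
    proof (rule prob_spaceI)
      have "emeasure U01 UNIV = 1" using em[of UNIV] by simp
      then show "emeasure U01 (space U01) = 1" by (simp add: U01_def)
    qed
    show "sets U01 = sets borel" by (simp add: U01_def)
  qed
  have "measure U01 {..a} = measure lborel ({0..1} \<inter> {..a})"
    by (simp add: measure_def em)
  also have "\<dots> = max 0 (min 1 a)"
  proof (cases "a < 0")
    case True then have "{0..1} \<inter> {..a} = {}" by auto
    then show ?thesis using True by simp
  next
    case False
    show ?thesis
    proof (cases "a \<le> 1")
      case True
      then have "{0..1} \<inter> {..a} = {0..a}" by auto
      then show ?thesis using True False by simp
    next
      case F2: False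
      then have "{0..1} \<inter> {..a} = {0..1}" by auto
      then show ?thesis using F2 by simp
    qed
  qed
  finally show "cdf U01 a = max 0 (min 1 a)" by (simp add: cdf_def)
qed

lemma push_uniform:
  assumes R: "real_distribution M" and cont: "\<And>x. isCont (cdf M) x" and sm: "strict_mono (cdf M)"
  shows "distr M borel (cdf M) = U01"
proof -
  interpret R: real_distribution M by fact
  let ?F = "cdf M"
  have Fm[measurable]: "?F \<in> borel_measurable borel"
    using cont by (intro borel_measurable_continuous_onI) (simp add: continuous_at_imp_continuous_on)
  have FmM[measurable]: "?F \<in> borel_measurable M" using Fm by (rule R.measurable_finite_borel)
  have Fpos: "?F x > 0" for x
    using sm[THEN strict_monoD, of "x - 1" x] R.cdf_nonneg[of "x - 1"] by simp
  have Flt1: "?F x < 1" for x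
    using sm[THEN strict_monoD, of x "x + 1"] R.cdf_bounded_prob[of "x + 1"] by simp
  have "cdf (distr M borel ?F) a = cdf U01 a" for a
  proof -
    have "cdf (distr M borel ?F) a = measure M (?F -` {..a} \<inter> space M)"
      unfolding cdf_def[of "distr M borel ?F"] by (rule measure_distr[OF FmM]) simp
    also have "\<dots> = measure M (?F -` {..a})" by simp
    also have "\<dots> = max 0 (min 1 a)"
    proof (cases "a \<le> 0")
      case True
      have "\<not> ?F x \<le> a" for x using Fpos[of x] True by linarith
      then have "?F -` {..a} = {}" by blast
      then show ?thesis using True by simp
    next
      case False
      show ?thesis
      proof (cases "a \<ge> 1")
        case True
        have "?F x \<le> a" for x using Flt1[of x] True by linarith
        then have "?F -` {..a} = UNIV" by blast
        then show ?thesis using True R.prob_space by simp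
      next
        case F2: False
        have a0: "0 < a" and a1: "a < 1" using False F2 by linarith+
        have "eventually (\<lambda>x. ?F x < a) at_bot"
          by (rule order_tendstoD(2)[OF R.cdf_lim_at_bot a0])
        from eventually_happens'[OF trivial_limit_at_bot_linorder this]
        obtain u where u: "?F u < a" by (rule exE)
        have "eventually (\<lambda>x. a < ?F x) at_top"
          by (rule order_tendstoD(1)[OF R.cdf_lim_at_top_prob a1])
        from eventually_happens'[OF trivial_limit_at_top_linorder this]
        obtain v where v: "?F v > a" by (rule exE)
        have uv: "u \<le> v"
        proof (rule ccontr)
          assume "\<not> u \<le> v" then have "v < u" by simp
          from strict_monoD[OF sm this] u v show False by linarith
        qed
        have "\<exists>s. u \<le> s \<and> s \<le> v \<and> ?F s = a"
          by (rule IVT[of ?F u a v]) (use u v uv cont in \<open>auto intro: less_imp_le\<close>)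
        then obtain s where s: "?F s = a" by blast
        have "?F x \<le> a \<longleftrightarrow> x \<le> s" for x
          unfolding s[symmetric] by (rule strict_mono_less_eq[OF sm])
        then have "?F -` {..a} = {..s}" by blast
        moreover have "measure M {..s} = a" using s unfolding cdf_def .
        ultimately show ?thesis using a0 a1 by (simp add: max_def min_def)
      qed
    qed
    also have "\<dots> = cdf U01 a" by (simp add: cdf_U01)
    finally show ?thesis .
  qed
  then show ?thesis
    by (intro cdf_unique U01_rd R.real_distribution_distr[OF FmM]) auto
qed
lemma pair_assoc_distr:
  assumes A: "sigma_finite_measure A" and B: "sigma_finite_measure B" and C: "sigma_finite_measure C"
  shows "distr (A \<Otimes>\<^sub>M (B \<Otimes>\<^sub>M C)) ((A \<Otimes>\<^sub>M B) \<Otimes>\<^sub>M C) (\<lambda>(a, (b, c)). ((a, b), c))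
         = (A \<Otimes>\<^sub>M B) \<Otimes>\<^sub>M C"
proof -
  interpret A: sigma_finite_measure A by fact
  interpret B: sigma_finite_measure B by fact
  interpret C: sigma_finite_measure C by fact
  interpret AB: pair_sigma_finite A B ..
  interpret BC: pair_sigma_finite B C ..
  let ?T = "\<lambda>(a, (b, c)). ((a, b), c)"
  have Tm[measurable]: "?T \<in> measurable (A \<Otimes>\<^sub>M (B \<Otimes>\<^sub>M C)) ((A \<Otimes>\<^sub>M B) \<Otimes>\<^sub>M C)"
    by measurable
  show ?thesis
  proof (rule pair_measure_eqI[symmetric])
    show "sigma_finite_measure (A \<Otimes>\<^sub>M B)" ..
    show "sigma_finite_measure C" by fact
    show "sets ((A \<Otimes>\<^sub>M B) \<Otimes>\<^sub>M C) = sets (distr (A \<Otimes>\<^sub>M (B \<Otimes>\<^sub>M C)) ((A \<Otimes>\<^sub>M B) \<Otimes>\<^sub>M C) ?T)"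
      by simp
  next
    fix X Y assume X[measurable]: "X \<in> sets (A \<Otimes>\<^sub>M B)" and Y[measurable]: "Y \<in> sets C"
    have "emeasure (distr (A \<Otimes>\<^sub>M (B \<Otimes>\<^sub>M C)) ((A \<Otimes>\<^sub>M B) \<Otimes>\<^sub>M C) ?T) (X \<times> Y)
        = emeasure (A \<Otimes>\<^sub>M (B \<Otimes>\<^sub>M C)) (?T -` (X \<times> Y) \<inter> space (A \<Otimes>\<^sub>M (B \<Otimes>\<^sub>M C)))"
      by (rule emeasure_distr) (auto)
    also have "\<dots> = (\<integral>\<^sup>+z. indicator X (fst z, fst (snd z)) * indicator Y (snd (snd z)) \<partial>(A \<Otimes>\<^sub>M (B \<Otimes>\<^sub>M C)))"
    proof -
      have S: "?T -` (X \<times> Y) \<inter> space (A \<Otimes>\<^sub>M (B \<Otimes>\<^sub>M C)) \<in> sets (A \<Otimes>\<^sub>M (B \<Otimes>\<^sub>M C))"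
        by (rule measurable_sets[OF Tm]) (simp add: pair_measureI)
      show ?thesis
        unfolding nn_integral_indicator[OF S, symmetric]
        by (intro nn_integral_cong) (auto simp: space_pair_measure indicator_def)
    qed
    also have "\<dots> = (\<integral>\<^sup>+a. \<integral>\<^sup>+bc. indicator X (a, fst bc) * indicator Y (snd bc) \<partial>(B \<Otimes>\<^sub>M C) \<partial>A)"
    proof (rule BC.nn_integral_fst[symmetric, where f="\<lambda>z. indicator X (fst z, fst (snd z)) * indicator Y (snd (snd z))", simplified])
      have p1: "(\<lambda>z. (fst z, fst (snd z))) \<in> measurable (A \<Otimes>\<^sub>M (B \<Otimes>\<^sub>M C)) (A \<Otimes>\<^sub>M B)"
        by (intro measurable_Pair measurable_fst measurable_compose[OF measurable_snd measurable_fst])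
      have p2: "(\<lambda>z. snd (snd z)) \<in> measurable (A \<Otimes>\<^sub>M (B \<Otimes>\<^sub>M C)) C"
        by (intro measurable_compose[OF measurable_snd measurable_snd])
      show "(\<lambda>z. indicator X (fst z, fst (snd z)) * indicator Y (snd (snd z)) :: ennreal) \<in> borel_measurable (A \<Otimes>\<^sub>M (B \<Otimes>\<^sub>M C))"
        using borel_measurable_times_ennreal[OF measurable_compose[OF p1 borel_measurable_indicator[OF X]]
              measurable_compose[OF p2 borel_measurable_indicator[OF Y]]] by simp
    qed
    also have "\<dots> = (\<integral>\<^sup>+a. \<integral>\<^sup>+b. \<integral>\<^sup>+c. indicator X (a, b) * indicator Y c \<partial>C \<partial>B \<partial>A)"
    proof (rule nn_integral_cong)
      fix a assume a: "a \<in> space A"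
      show "(\<integral>\<^sup>+bc. indicator X (a, fst bc) * indicator Y (snd bc) \<partial>(B \<Otimes>\<^sub>M C))
          = (\<integral>\<^sup>+b. \<integral>\<^sup>+c. indicator X (a, b) * indicator Y c \<partial>C \<partial>B)"
      proof -
        have m1: "(\<lambda>b. indicator X (a,b) :: ennreal) \<in> borel_measurable B"
          by (rule measurable_Pair2[OF borel_measurable_indicator[OF X] a])
        have m2: "(\<lambda>bc. indicator X (a, fst bc) :: ennreal) \<in> borel_measurable (B \<Otimes>\<^sub>M C)"
          by (rule measurable_compose[OF measurable_fst m1])
        have m3: "(\<lambda>bc. indicator Y (snd bc) :: ennreal) \<in> borel_measurable (B \<Otimes>\<^sub>M C)"
          by (rule measurable_compose[OF measurable_snd borel_measurable_indicator[OF Y]])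
        have "(\<lambda>bc. indicator X (a, fst bc) * indicator Y (snd bc) :: ennreal) \<in> borel_measurable (B \<Otimes>\<^sub>M C)"
          by (rule borel_measurable_times_ennreal[OF m2 m3])
        from C.nn_integral_fst[OF this] show ?thesis unfolding fst_conv snd_conv by (rule sym)
      qed
    qed
    also have "\<dots> = (\<integral>\<^sup>+a. \<integral>\<^sup>+b. indicator X (a, b) * emeasure C Y \<partial>B \<partial>A)"
      by (rule nn_integral_cong) (simp add: nn_integral_cmult[OF borel_measurable_indicator[OF Y]] nn_integral_indicator[OF Y])
    also have "\<dots> = (\<integral>\<^sup>+z. indicator X z * emeasure C Y \<partial>(A \<Otimes>\<^sub>M B))"
      by (rule B.nn_integral_fst[where f="\<lambda>z. indicator X z * emeasure C Y"])
        (rule borel_measurable_times_ennreal[OF borel_measurable_indicator[OF X] measurable_const], simp)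
    also have "\<dots> = emeasure (A \<Otimes>\<^sub>M B) X * emeasure C Y"
      by (simp only: nn_integral_multc[OF borel_measurable_indicator[OF X]] nn_integral_indicator[OF X])
    finally show "emeasure (A \<Otimes>\<^sub>M B) X * emeasure C Y
        = emeasure (distr (A \<Otimes>\<^sub>M (B \<Otimes>\<^sub>M C)) ((A \<Otimes>\<^sub>M B) \<Otimes>\<^sub>M C) ?T) (X \<times> Y)" by (rule sym)
  qed
qed

lemma U01_alt: "U01 = density lborel (\<lambda>x. ennreal (indicator {0..1::real} x))"
  unfolding U01_def by (simp add: ennreal_indicator)

lemma cov:
  fixes q :: "real \<Rightarrow> real"
  assumes q_nn: "\<And>x. 0 \<le> q x" and q_int: "integrable lborel q" and q1: "(\<integral>x. q x \<partial>lborel) = 1"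
    and pos: "\<And>x. 0 < q x"
  shows cov_sm: "strict_mono (cdf (density lborel (\<lambda>x. ennreal (q x))))"
    and cov_push: "distr (density lborel (\<lambda>x. ennreal (q x))) borel (cdf (density lborel (\<lambda>x. ennreal (q x)))) = U01"
    and cov_meas: "cdf (density lborel (\<lambda>x. ennreal (q x))) \<in> borel_measurable borel"
    and cov_int: "\<And>g. g \<in> borel_measurable borel \<Longrightarrow>
       (\<integral>x. q x * g (cdf (density lborel (\<lambda>x. ennreal (q x))) x) \<partial>lborel) = (LINT f:{0..1}|lborel. g f)"
    and cov_AE: "\<And>P. {f. P f} \<in> sets borel \<Longrightarrow> (AE f in U01. P f) \<Longrightarrow>
       (AE x in lborel. P (cdf (density lborel (\<lambda>x. ennreal (q x))) x))"
proof -
  let ?M = "density lborel (\<lambda>x. ennreal (q x))"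
  let ?F = "cdf ?M"
  have R: "real_distribution ?M" by (rule dens_rd[OF q_nn q_int q1])
  have cont: "\<And>x. isCont ?F x" by (rule dens_rd[OF q_nn q_int q1])
  have qm[measurable]: "q \<in> borel_measurable borel" using q_int by auto
  show sm: "strict_mono ?F"
    by (rule strict_monoI, rule dens_strict[OF q_nn q_int q1]) (use pos in auto)
  show push: "distr ?M borel ?F = U01" by (rule push_uniform[OF R cont sm])
  show Fm: "?F \<in> borel_measurable borel"
    using cont by (intro borel_measurable_continuous_onI) (simp add: continuous_at_imp_continuous_on)
  have FmM: "?F \<in> measurable ?M borel" using Fm by (simp add: measurable_def)
  show "(\<integral>x. q x * g (?F x) \<partial>lborel) = (LINT f:{0..1}|lborel. g f)"
    if g[measurable]: "g \<in> borel_measurable borel" for g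
  proof -
    have gF: "(\<lambda>x. g (?F x)) \<in> borel_measurable borel" by (rule measurable_compose[OF Fm g])
    have "(\<integral>x. q x * g (?F x) \<partial>lborel) = integral\<^sup>L ?M (\<lambda>x. g (?F x))"
      by (rule integral_real_density[symmetric]) (use gF q_nn in auto)
    also have "\<dots> = integral\<^sup>L (distr ?M borel ?F) g"
      by (rule integral_distr[symmetric, OF FmM g])
    also have "\<dots> = integral\<^sup>L U01 g" by (simp only: push)
    also have "\<dots> = (\<integral>x. indicator {0..1} x * g x \<partial>lborel)"
      unfolding U01_alt by (rule integral_real_density) auto
    finally show ?thesis by (simp add: set_lebesgue_integral_def)
  qed
  show "AE x in lborel. P (?F x)" if P: "{f. P f} \<in> sets borel" and ae: "AE f in U01. P f" for P
  proof -
    have "AE f in distr ?M borel ?F. P f" using ae by (simp only: push)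
    then have "AE x in ?M. P (?F x)"
      using AE_distr_iff[OF FmM, of P] P by simp
    then show ?thesis
      by (subst (asm) AE_density) (use pos in auto)
  qed
qed

lemma assoc_integrable:
  fixes f :: "'a \<Rightarrow> 'b \<Rightarrow> 'c \<Rightarrow> real"
  assumes A: "sigma_finite_measure A" and B: "sigma_finite_measure B" and C: "sigma_finite_measure C"
    and int: "integrable (A \<Otimes>\<^sub>M (B \<Otimes>\<^sub>M C)) (\<lambda>(a, b, c). f a b c)"
  shows "integrable ((A \<Otimes>\<^sub>M B) \<Otimes>\<^sub>M C) (\<lambda>(ab, c). f (fst ab) (snd ab) c)"
proof -
  let ?T = "\<lambda>(a, (b, c)). ((a, b), c)"
  let ?N = "A \<Otimes>\<^sub>M (B \<Otimes>\<^sub>M C)"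
  let ?Q = "(A \<Otimes>\<^sub>M B) \<Otimes>\<^sub>M C"
  have Tm: "?T \<in> measurable ?N ?Q" by measurable
  have Sm: "(\<lambda>(ab, c). (fst ab, snd ab, c)) \<in> measurable ?Q ?N" by measurable
  have fm: "(\<lambda>(a, b, c). f a b c) \<in> borel_measurable ?N" using int by auto
  have gm: "(\<lambda>(ab, c). f (fst ab) (snd ab) c) \<in> borel_measurable ?Q"
    using measurable_compose[OF Sm fm] by (simp add: case_prod_beta')
  have "integrable (distr ?N ?Q ?T) (\<lambda>(ab, c). f (fst ab) (snd ab) c)"
    unfolding integrable_distr_eq[OF Tm gm]
    using int by (simp add: case_prod_beta')
  then show ?thesis using pair_assoc_distr[OF A B C] by simp
qed

lemma xlnx_ge: "0 < (x::real) \<Longrightarrow> 0 \<le> x * ln x - x + 1"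
proof -
  assume x: "0 < x"
  have "ln (1/x) \<le> 1/x - 1" using x by (intro ln_le_minus_one) simp
  then have "- ln x \<le> 1/x - 1" using x by (simp add: ln_div)
  then have "x * (- ln x) \<le> x * (1/x - 1)" using x by (intro mult_left_mono) auto
  moreover have "x * (1/x - 1) = 1 - x" using x by (simp add: field_simps)
  ultimately show ?thesis by linarith
qed

lemma ln_less_minus_one: "0 < (y::real) \<Longrightarrow> y \<noteq> 1 \<Longrightarrow> ln y < y - 1"
proof -
  assume y: "0 < y" "y \<noteq> 1"
  have s: "0 < sqrt y" "sqrt y \<noteq> 1" using y by auto
  have "ln y = 2 * ln (sqrt y)" using y by (simp add: ln_sqrt)
  also have "\<dots> \<le> 2 * (sqrt y - 1)" using ln_le_minus_one[OF s(1)] by simp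
  also have "\<dots> < y - 1"
  proof -
    have "0 < (sqrt y - 1)^2" using s by simp
    then show ?thesis using y by (simp add: power2_eq_square algebra_simps)
  qed
  finally show ?thesis .
qed

lemma xlnx_eq: "0 < (x::real) \<Longrightarrow> x * ln x - x + 1 = 0 \<longleftrightarrow> x = 1"
proof
  assume x: "0 < x" and e: "x * ln x - x + 1 = 0"
  show "x = 1"
  proof (rule ccontr)
    assume n: "x \<noteq> 1"
    have "ln (1/x) < 1/x - 1" using x n by (intro ln_less_minus_one) auto
    then have "- ln x < 1/x - 1" using x by (simp add: ln_div)
    then have "x * (- ln x) < x * (1/x - 1)" using x by (intro mult_strict_left_mono) auto
    moreover have "x * (1/x - 1) = 1 - x" using x by (simp add: field_simps)
    ultimately show False using e by linarith
  qed
qed simp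

theorem theorem1:
  fixes MJ :: "'j measure" and MP :: "'w measure"
    and p :: "'j \<Rightarrow> real \<Rightarrow> real"
    and PI :: "'w \<Rightarrow> 'j \<Rightarrow> real \<Rightarrow> real"
  assumes MJ_prob: "prob_space MJ"
    and MP_prob: "prob_space MP"
    \<comment> \<open>published forecasts: strictly positive probability densities on the reals\<close>
    and p_pos: "\<And>J x. p J x > 0"
    and p_int: "\<And>J. integrable lborel (p J)"
    and p_norm: "\<And>J. (\<integral>x. p J x \<partial>lborel) = 1"
    and p_meas: "(\<lambda>(J, x). p J x) \<in> borel_measurable (MJ \<Otimes>\<^sub>M lborel)"
    \<comment> \<open>random ideal PIT densities on [0,1], jointly measurable\<close>
    and Pi_nonneg: "\<And>w J f. f \<in> {0..1} \<Longrightarrow> PI w J f \<ge> 0"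
    and Pi_int: "\<And>w J. set_integrable lborel {0..1} (PI w J)"
    and Pi_norm: "\<And>w J. (LINT f:{0..1}|lborel. PI w J f) = 1"
    and Pi_meas: "(\<lambda>(w, J, f). PI w J f) \<in> borel_measurable (MP \<Otimes>\<^sub>M MJ \<Otimes>\<^sub>M lborel)"
    \<comment> \<open>predictive density: strictly positive probability density on [0,1]\<close>
    and pibar_pos: "\<And>f. f \<in> {0..1} \<Longrightarrow> pibar MP MJ PI f > 0"
    and pibar_int: "set_integrable lborel {0..1} (pibar MP MJ PI)"
    and pibar_norm: "(LINT f:{0..1}|lborel. pibar MP MJ PI f) = 1"
    \<comment> \<open>all integrals/expectations finite; Fubini interchange allowed\<close>
    and fub1: "integrable (MP \<Otimes>\<^sub>M MJ \<Otimes>\<^sub>M lborel)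
                 (\<lambda>(w, J, f). indicator {0..1} f * PI w J f)"
    and fub2: "integrable (MP \<Otimes>\<^sub>M MJ \<Otimes>\<^sub>M lborel)
                 (\<lambda>(w, J, f). indicator {0..1} f * PI w J f * log 2 (pibar MP MJ PI f))"
    and ds_int: "\<And>w J. integrable lborel
                   (\<lambda>x. PiX PI p w J x * log 2 (p1 MP MJ PI p J x / p J x))"
    and ds_intJ: "\<And>w. integrable MJ (\<lambda>J. delta_s MP MJ PI p w J)"
    and ds_intP: "integrable MP (\<lambda>w. \<integral>J. delta_s MP MJ PI p w J \<partial>MJ)"
  shows
    \<comment> \<open>(i) Delta s is the difference of KL divergences when both are finite\<close>
    "(\<forall>w J. integrable lborel (\<lambda>x. PiX PI p w J x * log 2 (PiX PI p w J x / p J x))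
          \<and> integrable lborel (\<lambda>x. PiX PI p w J x * log 2 (PiX PI p w J x / p1 MP MJ PI p J x))
          \<longrightarrow> delta_s MP MJ PI p w J
               = KL (PiX PI p w J) (p J) - KL (PiX PI p w J) (p1 MP MJ PI p J))
     \<and> (\<integral>w. (\<integral>J. delta_s MP MJ PI p w J \<partial>MJ) \<partial>MP)
         = (LINT f:{0..1}|lborel. pibar MP MJ PI f * log 2 (pibar MP MJ PI f))
     \<and> (LINT f:{0..1}|lborel. pibar MP MJ PI f * log 2 (pibar MP MJ PI f)) \<ge> 0
     \<and> ((LINT f:{0..1}|lborel. pibar MP MJ PI f * log 2 (pibar MP MJ PI f)) = 0
         \<longleftrightarrow> (AE f in lborel. f \<in> {0..1} \<longrightarrow> pibar MP MJ PI f = 1))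
     \<and> ((AE f in lborel. f \<in> {0..1} \<longrightarrow> pibar MP MJ PI f = 1)
         \<longrightarrow> (\<forall>J. AE x in lborel. p1 MP MJ PI p J x = p J x))
     \<comment> \<open>(ii) Gt o F is the CDF of p1, and the recalibrated PIT is calibrated on average\<close>
     \<and> (\<forall>J x. Gt MP MJ PI (PIT p J x) = PIT (p1 MP MJ PI p) J x)
     \<and> (\<forall>g\<in>{0..1}. (\<integral>w. PiGC MP MJ PI w g \<partial>MP) = 1)"
proof -
  interpret MJ: prob_space MJ by (rule MJ_prob)
  interpret MP: prob_space MP by (rule MP_prob)
  let ?b = "pibar MP MJ PI"
  have pnn: "\<And>J x. 0 \<le> p J x" using p_pos less_imp_le by blast
  have Feq: "\<And>J. PIT p J = cdf (density lborel (\<lambda>x. ennreal (p J x)))"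
    unfolding PIT_def by (rule ext, rule dens_rd(2)[OF pnn p_int p_norm, symmetric])
  have RJ: "\<And>J. real_distribution (density lborel (\<lambda>x. ennreal (p J x)))"
    by (rule dens_rd(1)[OF pnn p_int p_norm])
  have F0: "\<And>J x. 0 \<le> PIT p J x"
    unfolding Feq by (rule finite_borel_measure.cdf_nonneg[OF real_distribution.finite_borel_measure_M[OF RJ]])
  have F1: "\<And>J x. PIT p J x \<le> 1"
    unfolding Feq by (rule real_distribution.cdf_bounded_prob[OF RJ])
  have F01: "\<And>J x. PIT p J x \<in> {0..1}" using F0 F1 by auto
  have Fsm: "\<And>J. strict_mono (PIT p J)" unfolding Feq by (rule cov_sm[OF pnn p_int p_norm p_pos])
  have Fint: "\<And>J g. g \<in> borel_measurable borel \<Longrightarrow>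
      (\<integral>x. p J x * g (PIT p J x) \<partial>lborel) = (LINT f:{0..1}|lborel. g f)"
    unfolding Feq by (rule cov_int[OF pnn p_int p_norm p_pos])
  have FAE: "\<And>J P. {f. P f} \<in> sets borel \<Longrightarrow> (AE f in U01. P f) \<Longrightarrow> AE x in lborel. P (PIT p J x)"
    unfolding Feq by (rule cov_AE[OF pnn p_int p_norm p_pos])
  have bm[measurable]: "(\<lambda>f. indicator {0..1} f * ?b f) \<in> borel_measurable borel"
    using pibar_int unfolding set_integrable_def by (auto dest: borel_measurable_integrable)
  have PIm[measurable]: "\<And>w J. (\<lambda>f. indicator {0..1} f * PI w J f) \<in> borel_measurable borel"
    using Pi_int unfolding set_integrable_def by (auto dest: borel_measurable_integrable)
  have bpos: "\<And>f. f \<in> {0..1} \<Longrightarrow> 0 < ?b f" by (rule pibar_pos)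
  have p1eq: "\<And>J x. p1 MP MJ PI p J x = ?b (PIT p J x) * p J x" unfolding p1_def by simp
  have PiXeq: "\<And>w J x. PiX PI p w J x = PI w J (PIT p J x) * p J x" unfolding PiX_def by simp

  have c1: "\<forall>w J. integrable lborel (\<lambda>x. PiX PI p w J x * log 2 (PiX PI p w J x / p J x))
          \<and> integrable lborel (\<lambda>x. PiX PI p w J x * log 2 (PiX PI p w J x / p1 MP MJ PI p J x))
          \<longrightarrow> delta_s MP MJ PI p w J
               = KL (PiX PI p w J) (p J) - KL (PiX PI p w J) (p1 MP MJ PI p J)"
  proof (intro allI impI, elim conjE)
    fix w J
    assume i1: "integrable lborel (\<lambda>x. PiX PI p w J x * log 2 (PiX PI p w J x / p J x))"
      and i2: "integrable lborel (\<lambda>x. PiX PI p w J x * log 2 (PiX PI p w J x / p1 MP MJ PI p J x))"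
    have pw: "PiX PI p w J x * log 2 (p1 MP MJ PI p J x / p J x)
        = PiX PI p w J x * log 2 (PiX PI p w J x / p J x) - PiX PI p w J x * log 2 (PiX PI p w J x / p1 MP MJ PI p J x)" for x
    proof -
      have px: "0 < p J x" by (rule p_pos)
      have b: "0 < ?b (PIT p J x)" using bpos F01 by blast
      have pi: "0 \<le> PI w J (PIT p J x)" using Pi_nonneg F01 by blast
      show ?thesis
      proof (cases "PI w J (PIT p J x) = 0")
        case True then show ?thesis by (simp add: PiXeq)
      next
        case False
        then have pi': "0 < PI w J (PIT p J x)" using pi by linarith
        have "log 2 (PiX PI p w J x / p J x) - log 2 (PiX PI p w J x / p1 MP MJ PI p J x)
            = log 2 (p1 MP MJ PI p J x / p J x)"
          using px b pi' by (simp add: PiXeq p1eq log_divide log_mult)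
        then show ?thesis by (simp add: right_diff_distrib[symmetric])
      qed
    qed
    have "delta_s MP MJ PI p w J = (\<integral>x. PiX PI p w J x * log 2 (PiX PI p w J x / p J x)
        - PiX PI p w J x * log 2 (PiX PI p w J x / p1 MP MJ PI p J x) \<partial>lborel)"
      unfolding delta_s_def by (simp only: pw)
    also have "\<dots> = KL (PiX PI p w J) (p J) - KL (PiX PI p w J) (p1 MP MJ PI p J)"
      unfolding KL_def by (rule Bochner_Integration.integral_diff[OF i1 i2])
    finally show "delta_s MP MJ PI p w J = KL (PiX PI p w J) (p J) - KL (PiX PI p w J) (p1 MP MJ PI p J)" .
  qed

  have c6: "\<forall>J x. Gt MP MJ PI (PIT p J x) = PIT (p1 MP MJ PI p) J x"
  proof (intro allI)
    fix J x
    let ?g = "\<lambda>u. indicator {..PIT p J x} u * (indicator {0..1} u * ?b u)"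
    have gm: "?g \<in> borel_measurable borel" by measurable
    have "PIT (p1 MP MJ PI p) J x = (\<integral>t. p J t * ?g (PIT p J t) \<partial>lborel)"
    proof -
      have "indicator {..x} t * p1 MP MJ PI p J t = p J t * ?g (PIT p J t)" for t
      proof -
        have "t \<le> x \<longleftrightarrow> PIT p J t \<le> PIT p J x" using strict_mono_less_eq[OF Fsm] by simp
        then show ?thesis using F01[of J t] by (simp add: p1eq indicator_def)
      qed
      then show ?thesis unfolding PIT_def set_lebesgue_integral_def by simp
    qed
    also have "\<dots> = (LINT u:{0..1}|lborel. ?g u)" by (rule Fint[OF gm])
    also have "\<dots> = Gt MP MJ PI (PIT p J x)"
    proof -
      have eq: "indicator {0..1} u * ?g u = indicator {0..PIT p J x} u * ?b u" for u
        using F1[of J x] by (auto simp: indicator_def)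
      show ?thesis unfolding Gt_def set_lebesgue_integral_def real_scaleR_def by (simp only: eq)
    qed
    finally show "Gt MP MJ PI (PIT p J x) = PIT (p1 MP MJ PI p) J x" by simp
  qed

  have c7: "\<forall>g\<in>{0..1}. (\<integral>w. PiGC MP MJ PI w g \<partial>MP) = 1"
  proof
    fix g :: real assume g: "g \<in> {0..1}"
    let ?q = "\<lambda>f. indicator {0..1} f * ?b f"
    have q_nn: "\<And>f. 0 \<le> ?q f" using bpos by (auto simp: indicator_def less_imp_le)
    have q_int: "integrable lborel ?q" using pibar_int unfolding set_integrable_def by simp
    have q1: "(\<integral>f. ?q f \<partial>lborel) = 1" using pibar_norm unfolding set_lebesgue_integral_def by simp
    let ?V = "density lborel (\<lambda>x. ennreal (?q x))"
    have GtV: "Gt MP MJ PI a = cdf ?V a" if a: "a \<in> {0..1}" for a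
    proof -
      have eq: "indicator {0..a} u * ?b u = indicator {..a} u * ?q u" for u
        using a by (auto simp: indicator_def)
      show ?thesis unfolding dens_rd(2)[OF q_nn q_int q1] Gt_def set_lebesgue_integral_def real_scaleR_def
        by (simp only: eq mult.assoc)
    qed
    have contV: "continuous_on {0..1} (Gt MP MJ PI)"
    proof -
      have "continuous_on {0..1} (cdf ?V)"
        by (intro continuous_at_imp_continuous_on ballI dens_rd(3)[OF q_nn q_int q1])
      then show ?thesis by (simp only: continuous_on_cong[OF refl GtV])
    qed
    have smV: "strict_mono_on {0..1} (Gt MP MJ PI)"
    proof (rule strict_mono_onI)
      fix a c :: real assume a: "a \<in> {0..1}" and c: "c \<in> {0..1}" and ac: "a < c"
      have "cdf ?V a < cdf ?V c"
        by (rule dens_strict[OF q_nn q_int q1 ac]) (use a c bpos in \<open>auto simp: indicator_def\<close>)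
      then show "Gt MP MJ PI a < Gt MP MJ PI c" using GtV[OF a] GtV[OF c] by linarith
    qed
    have inj: "inj_on (Gt MP MJ PI) {0..1}" by (rule strict_mono_on_imp_inj_on[OF smV])
    have G0: "Gt MP MJ PI 0 = 0"
    proof -
      have "AE t in lborel. indicator {0..0} t * ?b t = (0::real)"
        using AE_lborel_singleton[of 0] by (rule eventually_mono) (simp add: indicator_def)
      then show ?thesis unfolding Gt_def set_lebesgue_integral_def real_scaleR_def
        by (rule integral_eq_zero_AE)
    qed
    have G1: "Gt MP MJ PI 1 = 1" using pibar_norm unfolding Gt_def .
    have "\<exists>x. 0 \<le> x \<and> x \<le> 1 \<and> Gt MP MJ PI x = g"
      by (rule IVT') (use g G0 G1 contV in auto)
    then have gim: "g \<in> Gt MP MJ PI ` {0..1}" by auto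
    define f0 where "f0 = the_inv_into {0..1} (Gt MP MJ PI) g"
    have f0: "f0 \<in> {0..1}" unfolding f0_def by (rule the_inv_into_into[OF inj gim]) simp
    have "(\<integral>w. PiGC MP MJ PI w g \<partial>MP) = (\<integral>w. PiC MJ PI w f0 / ?b f0 \<partial>MP)"
      unfolding PiGC_def PiG_def Let_def f0_def[symmetric] PiC_def by (simp add: integral_divide_zero)
    also have "\<dots> = ?b f0 / ?b f0" by (simp add: integral_divide_zero pibar_def)
    also have "\<dots> = 1" using bpos[OF f0] by simp
    finally show "(\<integral>w. PiGC MP MJ PI w g \<partial>MP) = 1" .
  qed

  have c2: "(\<integral>w. (\<integral>J. delta_s MP MJ PI p w J \<partial>MJ) \<partial>MP)
         = (LINT f:{0..1}|lborel. ?b f * log 2 (?b f))"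
   and c2i: "set_integrable lborel {0..1} (\<lambda>f. ?b f * log 2 (?b f))"
  proof -
    let ?h = "\<lambda>w J f. indicator {0..1} f * PI w J f * log 2 (?b f)"
    let ?k = "\<lambda>w J f. indicator {0..1} f * PI w J f"
    have dsh: "delta_s MP MJ PI p w J = (\<integral>f. ?h w J f \<partial>lborel)" for w J
    proof -
      let ?G = "\<lambda>f. (indicator {0..1} f * PI w J f) * log 2 (indicator {0..1} f * ?b f)"
      have Gm: "?G \<in> borel_measurable borel" by measurable
      have pw: "PiX PI p w J x * log 2 (p1 MP MJ PI p J x / p J x) = p J x * ?G (PIT p J x)" for x
      proof -
        have "?b (PIT p J x) * p J x / p J x = ?b (PIT p J x)" using p_pos[of J x] by simp
        then show ?thesis using F01[of J x] by (simp add: PiXeq p1eq)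
      qed
      have "delta_s MP MJ PI p w J = (\<integral>x. p J x * ?G (PIT p J x) \<partial>lborel)"
        unfolding delta_s_def by (simp only: pw)
      also have "\<dots> = (LINT f:{0..1}|lborel. ?G f)" by (rule Fint[OF Gm])
      also have "\<dots> = (\<integral>f. ?h w J f \<partial>lborel)"
        unfolding set_lebesgue_integral_def real_scaleR_def
        by (rule Bochner_Integration.integral_cong[OF refl]) (auto simp: indicator_def)
      finally show ?thesis .
    qed
    have sfP: "sigma_finite_measure MP" by (rule MP.sigma_finite_measure_axioms)
    have sfJ: "sigma_finite_measure MJ" by (rule MJ.sigma_finite_measure_axioms)
    have sfL: "sigma_finite_measure (lborel :: real measure)" by (rule lborel.sigma_finite_measure_axioms)
    interpret PJ: pair_sigma_finite MP MJ by (intro pair_sigma_finite.intro sfP sfJ)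
    have sfPJ: "sigma_finite_measure (MP \<Otimes>\<^sub>M MJ)" by (rule PJ.sigma_finite_measure_axioms)
    interpret PQ: pair_sigma_finite "MP \<Otimes>\<^sub>M MJ" "lborel :: real measure" by (intro pair_sigma_finite.intro sfPJ sfL)
    have Q2: "integrable ((MP \<Otimes>\<^sub>M MJ) \<Otimes>\<^sub>M lborel) (\<lambda>(wJ, f). ?h (fst wJ) (snd wJ) f)"
      by (rule assoc_integrable[OF sfP sfJ sfL, where f="?h", OF fub2])
    have Q1: "integrable ((MP \<Otimes>\<^sub>M MJ) \<Otimes>\<^sub>M lborel) (\<lambda>(wJ, f). ?k (fst wJ) (snd wJ) f)"
      by (rule assoc_integrable[OF sfP sfJ sfL, where f="?k", OF fub1])
    let ?D = "\<lambda>wJ. \<integral>f. ?h (fst wJ) (snd wJ) f \<partial>lborel"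
    let ?E = "\<lambda>f. \<integral>wJ. ?h (fst wJ) (snd wJ) f \<partial>(MP \<Otimes>\<^sub>M MJ)"
    have Dint: "integrable (MP \<Otimes>\<^sub>M MJ) ?D" by (rule PQ.integrable_fst[OF Q2])
    have Dint': "integrable (MP \<Otimes>\<^sub>M MJ) (\<lambda>(w, J). \<integral>f. ?h w J f \<partial>lborel)"
      using Dint by (simp add: split_beta')
    have "(\<integral>w. (\<integral>J. delta_s MP MJ PI p w J \<partial>MJ) \<partial>MP)
        = (\<integral>w. (\<integral>J. (\<integral>f. ?h w J f \<partial>lborel) \<partial>MJ) \<partial>MP)" by (simp only: dsh)
    also have "\<dots> = integral\<^sup>L (MP \<Otimes>\<^sub>M MJ) (\<lambda>(w, J). \<integral>f. ?h w J f \<partial>lborel)"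
      by (rule PJ.integral_fst[OF Dint'])
    also have "\<dots> = integral\<^sup>L (MP \<Otimes>\<^sub>M MJ) ?D" by (simp add: split_beta')
    also have "\<dots> = integral\<^sup>L ((MP \<Otimes>\<^sub>M MJ) \<Otimes>\<^sub>M lborel) (\<lambda>(wJ, f). ?h (fst wJ) (snd wJ) f)"
      by (rule PQ.integral_fst[OF Q2])
    also have "\<dots> = (\<integral>f. ?E f \<partial>lborel)"
      by (rule PQ.integral_snd[OF Q2, symmetric])
    finally have L: "(\<integral>w. (\<integral>J. delta_s MP MJ PI p w J \<partial>MJ) \<partial>MP) = (\<integral>f. ?E f \<partial>lborel)" .
    have Eint: "integrable lborel ?E" by (rule PQ.integrable_snd[OF Q2])
    have AEk: "AE f in lborel. integrable (MP \<Otimes>\<^sub>M MJ) (\<lambda>wJ. ?k (fst wJ) (snd wJ) f)"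
      by (rule PQ.AE_integrable_snd[OF Q1])
    have AEE: "AE f in lborel. ?E f = (indicator {0..1} f * ?b f) * log 2 (indicator {0..1} f * ?b f)"
      using AEk
    proof (rule eventually_mono)
      fix f assume kf: "integrable (MP \<Otimes>\<^sub>M MJ) (\<lambda>wJ. ?k (fst wJ) (snd wJ) f)"
      have kf': "integrable (MP \<Otimes>\<^sub>M MJ) (\<lambda>(w, J). ?k w J f)" using kf by (simp add: split_beta')
      have "?E f = (\<integral>wJ. log 2 (?b f) * ?k (fst wJ) (snd wJ) f \<partial>(MP \<Otimes>\<^sub>M MJ))"
        by (simp add: mult.commute mult.left_commute)
      also have "\<dots> = log 2 (?b f) * (\<integral>wJ. ?k (fst wJ) (snd wJ) f \<partial>(MP \<Otimes>\<^sub>M MJ))"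
        by (rule integral_mult_right_zero)
      also have "(\<integral>wJ. ?k (fst wJ) (snd wJ) f \<partial>(MP \<Otimes>\<^sub>M MJ)) = integral\<^sup>L (MP \<Otimes>\<^sub>M MJ) (\<lambda>(w, J). ?k w J f)"
        by (simp add: split_beta')
      also have "\<dots> = (\<integral>w. (\<integral>J. ?k w J f \<partial>MJ) \<partial>MP)"
        by (rule PJ.integral_fst[OF kf', symmetric])
      also have "\<dots> = indicator {0..1} f * ?b f"
        unfolding pibar_def PiC_def by (simp add: integral_mult_right_zero)
      finally show "?E f = (indicator {0..1} f * ?b f) * log 2 (indicator {0..1} f * ?b f)"
        by (simp add: indicator_def)
    qed
    have Em: "?E \<in> borel_measurable lborel" using Eint by (rule borel_measurable_integrable)
    have Bm: "(\<lambda>f. (indicator {0..1} f * ?b f) * log 2 (indicator {0..1} f * ?b f)) \<in> borel_measurable lborel"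
      by measurable
    have eqS: "indicator {0..1} f *\<^sub>R (?b f * log 2 (?b f)) = (indicator {0..1} f * ?b f) * log 2 (indicator {0..1} f * ?b f)" for f
      by (simp add: indicator_def)
    show "set_integrable lborel {0..1} (\<lambda>f. ?b f * log 2 (?b f))"
      unfolding set_integrable_def eqS
      by (rule integrable_cong_AE_imp[OF Eint Bm]) (use AEE in \<open>auto elim!: eventually_mono\<close>)
    have "(\<integral>f. ?E f \<partial>lborel) = (LINT f:{0..1}|lborel. ?b f * log 2 (?b f))"
      unfolding set_lebesgue_integral_def eqS
      by (rule integral_cong_AE[OF Em Bm AEE])
    with L show "(\<integral>w. (\<integral>J. delta_s MP MJ PI p w J \<partial>MJ) \<partial>MP)
         = (LINT f:{0..1}|lborel. ?b f * log 2 (?b f))" by simp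
  qed

  have c3: "(LINT f:{0..1}|lborel. ?b f * log 2 (?b f)) \<ge> 0"
   and c4: "((LINT f:{0..1}|lborel. ?b f * log 2 (?b f)) = 0
         \<longleftrightarrow> (AE f in lborel. f \<in> {0..1} \<longrightarrow> ?b f = 1))"
  proof -
    let ?I = "LINT f:{0..1}|lborel. ?b f * log 2 (?b f)"
    let ?phi = "\<lambda>f. indicator {0..1} f * (?b f * ln (?b f) - ?b f + 1) :: real"
    have A1: "integrable lborel (\<lambda>f. indicator {0..1} f *\<^sub>R (?b f * log 2 (?b f)))"
      using c2i unfolding set_integrable_def .
    have A2: "integrable lborel (\<lambda>f. indicator {0..1} f * ?b f)"
      using pibar_int unfolding set_integrable_def by simp
    have A3: "integrable lborel (\<lambda>f. indicator {0..1::real} f :: real)"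
      by (rule integrable_real_indicator) auto
    have phieq: "?phi f = ln 2 * (indicator {0..1} f *\<^sub>R (?b f * log 2 (?b f)))
        - indicator {0..1} f * ?b f + indicator {0..1} f" for f
      by (simp add: log_def indicator_def algebra_simps)
    have A4: "integrable lborel (\<lambda>f. ln 2 * (indicator {0..1} f *\<^sub>R (?b f * log 2 (?b f))))"
      using A1 by (rule integrable_mult_right)
    have phi_int: "integrable lborel ?phi"
      unfolding phieq by (intro Bochner_Integration.integrable_add Bochner_Integration.integrable_diff A4 A2 A3)
    have "(\<integral>f. ?phi f \<partial>lborel) = ln 2 * ?I - 1 + 1"
    proof -
      have "(\<integral>f. ?phi f \<partial>lborel) = (\<integral>f. ln 2 * (indicator {0..1} f *\<^sub>R (?b f * log 2 (?b f)))
          - indicator {0..1} f * ?b f \<partial>lborel) + (\<integral>f. (indicator {0..1::real} f :: real) \<partial>lborel)"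
        unfolding phieq by (intro Bochner_Integration.integral_add Bochner_Integration.integrable_diff A4 A2 A3)
      also have "(\<integral>f. ln 2 * (indicator {0..1} f *\<^sub>R (?b f * log 2 (?b f)))
          - indicator {0..1} f * ?b f \<partial>lborel)
          = (\<integral>f. ln 2 * (indicator {0..1} f *\<^sub>R (?b f * log 2 (?b f))) \<partial>lborel)
          - (\<integral>f. indicator {0..1} f * ?b f \<partial>lborel)"
        by (rule Bochner_Integration.integral_diff[OF A4 A2])
      also have "(\<integral>f. ln 2 * (indicator {0..1} f *\<^sub>R (?b f * log 2 (?b f))) \<partial>lborel) = ln 2 * ?I"
        unfolding set_lebesgue_integral_def by (rule integral_mult_right_zero)
      also have "(\<integral>f. indicator {0..1} f * ?b f \<partial>lborel) = 1"
        using pibar_norm unfolding set_lebesgue_integral_def by simp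
      also have "(\<integral>f. (indicator {0..1::real} f :: real) \<partial>lborel) = 1" by simp
      finally show ?thesis .
    qed
    then have phiI: "(\<integral>f. ?phi f \<partial>lborel) = ln 2 * ?I" by simp
    have phi_nn: "0 \<le> ?phi f" for f
      using xlnx_ge[OF bpos[of f]] by (auto simp: indicator_def)
    have "0 \<le> (\<integral>f. ?phi f \<partial>lborel)" using phi_nn by (intro integral_nonneg_AE) auto
    then have "0 \<le> ln 2 * ?I" using phiI by simp
    then show "?I \<ge> 0" by (simp add: zero_le_mult_iff)
    have "?I = 0 \<longleftrightarrow> (\<integral>f. ?phi f \<partial>lborel) = 0" using phiI by simp
    also have "\<dots> \<longleftrightarrow> (AE f in lborel. ?phi f = 0)"
      by (rule integral_nonneg_eq_0_iff_AE[OF phi_int]) (use phi_nn in auto)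
    also have "\<dots> \<longleftrightarrow> (AE f in lborel. f \<in> {0..1} \<longrightarrow> ?b f = 1)"
    proof -
      have "?phi f = 0 \<longleftrightarrow> (f \<in> {0..1} \<longrightarrow> ?b f = 1)" for f
        using xlnx_eq[OF bpos[of f]] by (auto simp: indicator_def)
      then show ?thesis by simp
    qed
    finally show "?I = 0 \<longleftrightarrow> (AE f in lborel. f \<in> {0..1} \<longrightarrow> ?b f = 1)" .
  qed

  have c5: "(AE f in lborel. f \<in> {0..1} \<longrightarrow> ?b f = 1)
         \<longrightarrow> (\<forall>J. AE x in lborel. p1 MP MJ PI p J x = p J x)"
  proof (intro impI allI)
    fix J assume ae: "AE f in lborel. f \<in> {0..1} \<longrightarrow> ?b f = 1"
    let ?P = "\<lambda>f. indicator {0..1} f * ?b f = indicator {0..1} f"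
    have Pm: "{f. ?P f} \<in> sets borel" by measurable
    have "AE f in U01. ?P f"
      unfolding U01_alt
      by (subst AE_density) (use ae in \<open>auto elim!: eventually_mono simp: indicator_def\<close>)
    from FAE[OF Pm this] show "AE x in lborel. p1 MP MJ PI p J x = p J x"
    proof (rule eventually_mono)
      fix x assume "?P (PIT p J x)"
      then have "?b (PIT p J x) = 1" using F01[of J x] by (simp add: indicator_def)
      then show "p1 MP MJ PI p J x = p J x" by (simp add: p1eq)
    qed
  qed
  show ?thesis using c1 c2 c3 c4 c5 c6 c7 by blast
qed

end
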